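(* Let $\mathcal G$ be a groupoid and $\mathcal C$ a finitely aligned left-cancellative small category such that $(\mathcal G,\mathcal C)$ is a matched pair. Then the Zappa–Szép product $\mathcal C\bowtie\mathcal G$ is left-cancellative and finitely aligned.
   Context: Categories are small, identified with morphism sets; $r,s$ range/source. Left-cancellative: $ab=ac\Rightarrow b=c$; finitely aligned: for all $a,b$ there is finite $F$ with $a\mathcal C\cap b\mathcal C=\bigcup_{c\in F}c\mathcal C$, where $c\mathcal C=\{cc'\}$. A matched pair $(\mathcal G,\mathcal C)$ with $\mathcal G^0=\mathcal C^0$ consists of a left action $g\triangleright c\in\mathcal C$ of $\mathcal G$ on $\mathcal C$ and a right action $g\triangleleft c\in\mathcal G$ of $\mathcal C$ on $\mathcal G$ (defined when $s(g)=r(c)$; satisfying $r(c)\triangleright c=c$, $g\triangleright s(g)=r(g)$, $r(g\triangleright c)=r(g)$, $(gh)\triangleright c=g\triangleright(h\triangleright c)$ and the symmetric right-action axioms) such that $s(g\triangleright c)=r(g\triangleleft c)$, $g\triangleright(c_1c_2)=(g\triangleright c_1)((g\triangleleft c_1)\triangleright c_2)$ and $(g_1g_2)\triangleleft c=(g_1\triangleleft(g_2\triangleright c))(g_2\triangleleft c)$. The Zappa–Szép product $\mathcal C\bowtie\mathcal G$ has morphisms $cg$ ($s(c)=r(g)$), $r(cg)=r(c)$, $s(cg)=s(g)$, and product $c_1g_1c_2g_2=c_1(g_1\triangleright c_2)(g_1\triangleleft c_2)g_2$; each element factors uniquely as $cg$. *)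

theory Defs
  imports Main
begin

text \<open>A small category is given by its set of morphisms A, range r, source s and
  a composition m; m a b is the composite ab, defined when s a = r b.
  Objects are identified with identity morphisms (those u with r u = u).\<close>

definition category :: "'a set \<Rightarrow> ('a \<Rightarrow> 'a) \<Rightarrow> ('a \<Rightarrow> 'a) \<Rightarrow> ('a \<Rightarrow> 'a \<Rightarrow> 'a) \<Rightarrow> bool" where
  "category A r s m \<longleftrightarrow>
     (\<forall>a\<in>A. r a \<in> A \<and> s a \<in> A \<and> r (r a) = r a \<and> s (r a) = r a
              \<and> r (s a) = s a \<and> s (s a) = s a
              \<and> m (r a) a = a \<and> m a (s a) = a) \<and>
     (\<forall>a\<in>A. \<forall>b\<in>A. s a = r b \<longrightarrow> m a b \<in> A \<and> r (m a b) = r a \<and> s (m a b) = s b) \<and>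
     (\<forall>a\<in>A. \<forall>b\<in>A. \<forall>c\<in>A. s a = r b \<longrightarrow> s b = r c \<longrightarrow> m (m a b) c = m a (m b c))"

definition objects :: "'a set \<Rightarrow> ('a \<Rightarrow> 'a) \<Rightarrow> 'a set" where
  "objects A r = {u \<in> A. r u = u}"

definition groupoid :: "'a set \<Rightarrow> ('a \<Rightarrow> 'a) \<Rightarrow> ('a \<Rightarrow> 'a) \<Rightarrow> ('a \<Rightarrow> 'a \<Rightarrow> 'a) \<Rightarrow> bool" where
  "groupoid A r s m \<longleftrightarrow> category A r s m \<and>
     (\<forall>g\<in>A. \<exists>h\<in>A. s g = r h \<and> s h = r g \<and> m g h = r g \<and> m h g = s g)"

definition left_cancellative :: "'a set \<Rightarrow> ('a \<Rightarrow> 'a) \<Rightarrow> ('a \<Rightarrow> 'a) \<Rightarrow> ('a \<Rightarrow> 'a \<Rightarrow> 'a) \<Rightarrow> bool" where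
  "left_cancellative A r s m \<longleftrightarrow>
     (\<forall>a\<in>A. \<forall>b\<in>A. \<forall>c\<in>A. s a = r b \<longrightarrow> s a = r c \<longrightarrow> m a b = m a c \<longrightarrow> b = c)"

definition right_ideal :: "'a set \<Rightarrow> ('a \<Rightarrow> 'a) \<Rightarrow> ('a \<Rightarrow> 'a) \<Rightarrow> ('a \<Rightarrow> 'a \<Rightarrow> 'a) \<Rightarrow> 'a \<Rightarrow> 'a set" where
  "right_ideal A r s m a = {m a c' | c'. c' \<in> A \<and> s a = r c'}"

definition finitely_aligned :: "'a set \<Rightarrow> ('a \<Rightarrow> 'a) \<Rightarrow> ('a \<Rightarrow> 'a) \<Rightarrow> ('a \<Rightarrow> 'a \<Rightarrow> 'a) \<Rightarrow> bool" where
  "finitely_aligned A r s m \<longleftrightarrow>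
     (\<forall>a\<in>A. \<forall>b\<in>A. \<exists>F. finite F \<and> F \<subseteq> A \<and>
        right_ideal A r s m a \<inter> right_ideal A r s m b = (\<Union>c\<in>F. right_ideal A r s m c))"

text \<open>Matched pair (G, C): lact g c = g \<triangleright> c, ract g c = g \<triangleleft> c, defined when sG g = rC c.\<close>
definition matched_pair ::
  "'a set \<Rightarrow> ('a \<Rightarrow> 'a) \<Rightarrow> ('a \<Rightarrow> 'a) \<Rightarrow> ('a \<Rightarrow> 'a \<Rightarrow> 'a) \<Rightarrow>
   'a set \<Rightarrow> ('a \<Rightarrow> 'a) \<Rightarrow> ('a \<Rightarrow> 'a) \<Rightarrow> ('a \<Rightarrow> 'a \<Rightarrow> 'a) \<Rightarrow>
   ('a \<Rightarrow> 'a \<Rightarrow> 'a) \<Rightarrow> ('a \<Rightarrow> 'a \<Rightarrow> 'a) \<Rightarrow> bool" where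
  "matched_pair G rG sG mG C rC sC mC lact ract \<longleftrightarrow>
     objects G rG = objects C rC \<and>
     \<comment> \<open>closure\<close>
     (\<forall>g\<in>G. \<forall>c\<in>C. sG g = rC c \<longrightarrow> lact g c \<in> C \<and> ract g c \<in> G) \<and>
     \<comment> \<open>left action of G on C\<close>
     (\<forall>c\<in>C. lact (rC c) c = c) \<and>
     (\<forall>g\<in>G. lact g (sG g) = rG g) \<and>
     (\<forall>g\<in>G. \<forall>c\<in>C. sG g = rC c \<longrightarrow> rC (lact g c) = rG g) \<and>
     (\<forall>g\<in>G. \<forall>h\<in>G. \<forall>c\<in>C. sG g = rG h \<longrightarrow> sG h = rC c \<longrightarrow>
         lact (mG g h) c = lact g (lact h c)) \<and>
     \<comment> \<open>right action of C on G\<close>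
     (\<forall>g\<in>G. ract g (sG g) = g) \<and>
     (\<forall>c\<in>C. ract (rC c) c = sC c) \<and>
     (\<forall>g\<in>G. \<forall>c\<in>C. sG g = rC c \<longrightarrow> sG (ract g c) = sC c) \<and>
     (\<forall>g\<in>G. \<forall>c1\<in>C. \<forall>c2\<in>C. sG g = rC c1 \<longrightarrow> sC c1 = rC c2 \<longrightarrow>
         ract g (mC c1 c2) = ract (ract g c1) c2) \<and>
     \<comment> \<open>compatibility\<close>
     (\<forall>g\<in>G. \<forall>c\<in>C. sG g = rC c \<longrightarrow> sC (lact g c) = rG (ract g c)) \<and>
     (\<forall>g\<in>G. \<forall>c1\<in>C. \<forall>c2\<in>C. sG g = rC c1 \<longrightarrow> sC c1 = rC c2 \<longrightarrow>
         lact g (mC c1 c2) = mC (lact g c1) (lact (ract g c1) c2)) \<and>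
     (\<forall>g1\<in>G. \<forall>g2\<in>G. \<forall>c\<in>C. sG g1 = rG g2 \<longrightarrow> sG g2 = rC c \<longrightarrow>
         ract (mG g1 g2) c = mG (ract g1 (lact g2 c)) (ract g2 c))"

text \<open>Zappa--Szep product C \<bowtie> G: morphisms are pairs (c, g) with sC c = rG g
  (written cg); objects are the pairs (u, u).\<close>
definition zs_mor :: "'a set \<Rightarrow> ('a \<Rightarrow> 'a) \<Rightarrow> 'a set \<Rightarrow> ('a \<Rightarrow> 'a) \<Rightarrow> ('a \<times> 'a) set" where
  "zs_mor C sC G rG = {(c, g). c \<in> C \<and> g \<in> G \<and> sC c = rG g}"

definition zs_r :: "('a \<Rightarrow> 'a) \<Rightarrow> 'a \<times> 'a \<Rightarrow> 'a \<times> 'a" where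
  "zs_r rC x = (rC (fst x), rC (fst x))"

definition zs_s :: "('a \<Rightarrow> 'a) \<Rightarrow> 'a \<times> 'a \<Rightarrow> 'a \<times> 'a" where
  "zs_s sG x = (sG (snd x), sG (snd x))"

definition zs_mult :: "('a \<Rightarrow> 'a \<Rightarrow> 'a) \<Rightarrow> ('a \<Rightarrow> 'a \<Rightarrow> 'a) \<Rightarrow> ('a \<Rightarrow> 'a \<Rightarrow> 'a) \<Rightarrow> ('a \<Rightarrow> 'a \<Rightarrow> 'a)
     \<Rightarrow> 'a \<times> 'a \<Rightarrow> 'a \<times> 'a \<Rightarrow> 'a \<times> 'a" where
  "zs_mult mC mG lact ract x y =
     (mC (fst x) (lact (snd x) (fst y)), mG (ract (snd x) (fst y)) (snd y))"

end

theory Submission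
  imports Defs
begin

locale zsctx =
  fixes G rG sG mG C rC sC mC lact ract
  assumes grp: "groupoid G rG sG mG"
    and cat: "category C rC sC mC"
    and lc: "left_cancellative C rC sC mC"
    and fa: "finitely_aligned C rC sC mC"
    and mp: "matched_pair G rG sG mG C rC sC mC lact ract"
begin

lemma gcat: "category G rG sG mG" using grp unfolding groupoid_def by blast

lemma G_r: "g \<in> G \<Longrightarrow> rG g \<in> G \<and> rG (rG g) = rG g \<and> sG (rG g) = rG g \<and> mG (rG g) g = g"
  using gcat unfolding category_def by (elim conjE) blast
lemma G_s: "g \<in> G \<Longrightarrow> sG g \<in> G \<and> rG (sG g) = sG g \<and> sG (sG g) = sG g \<and> mG g (sG g) = g"
  using gcat unfolding category_def by (elim conjE) blast
lemma G_m: "g \<in> G \<Longrightarrow> h \<in> G \<Longrightarrow> sG g = rG h \<Longrightarrow> mG g h \<in> G \<and> rG (mG g h) = rG g \<and> sG (mG g h) = sG h"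
  using gcat unfolding category_def by (elim conjE) blast
lemma G_assoc: "a \<in> G \<Longrightarrow> b \<in> G \<Longrightarrow> c \<in> G \<Longrightarrow> sG a = rG b \<Longrightarrow> sG b = rG c \<Longrightarrow> mG (mG a b) c = mG a (mG b c)"
  using gcat unfolding category_def by (elim conjE) blast
lemma G_inv: "g \<in> G \<Longrightarrow> \<exists>h\<in>G. sG g = rG h \<and> sG h = rG g \<and> mG g h = rG g \<and> mG h g = sG g"
  using grp unfolding groupoid_def by blast

lemma C_r: "c \<in> C \<Longrightarrow> rC c \<in> C \<and> rC (rC c) = rC c \<and> sC (rC c) = rC c \<and> mC (rC c) c = c"
  using cat unfolding category_def by (elim conjE) blast
lemma C_s: "c \<in> C \<Longrightarrow> sC c \<in> C \<and> rC (sC c) = sC c \<and> sC (sC c) = sC c \<and> mC c (sC c) = c"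
  using cat unfolding category_def by (elim conjE) blast
lemma C_m: "a \<in> C \<Longrightarrow> b \<in> C \<Longrightarrow> sC a = rC b \<Longrightarrow> mC a b \<in> C \<and> rC (mC a b) = rC a \<and> sC (mC a b) = sC b"
  using cat unfolding category_def by (elim conjE) blast

lemma objs: "objects G rG = objects C rC" using mp unfolding matched_pair_def by (elim conjE) blast

lemma sC_in_G: "c \<in> C \<Longrightarrow> sC c \<in> G \<and> rG (sC c) = sC c"
proof -
  assume c: "c \<in> C"
  hence "sC c \<in> objects C rC" using C_s unfolding objects_def by auto
  hence "sC c \<in> objects G rG" using objs by simp
  thus ?thesis unfolding objects_def by auto
qed

lemma closure: "g \<in> G \<Longrightarrow> c \<in> C \<Longrightarrow> sG g = rC c \<Longrightarrow> lact g c \<in> C \<and> ract g c \<in> G"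
  using mp unfolding matched_pair_def by (elim conjE) blast
lemma lact_id: "c \<in> C \<Longrightarrow> lact (rC c) c = c"
  using mp unfolding matched_pair_def by (elim conjE) blast
lemma r_lact: "g \<in> G \<Longrightarrow> c \<in> C \<Longrightarrow> sG g = rC c \<Longrightarrow> rC (lact g c) = rG g"
  using mp unfolding matched_pair_def by (elim conjE) blast
lemma lact_m: "g \<in> G \<Longrightarrow> h \<in> G \<Longrightarrow> c \<in> C \<Longrightarrow> sG g = rG h \<Longrightarrow> sG h = rC c \<Longrightarrow>
         lact (mG g h) c = lact g (lact h c)"
  using mp unfolding matched_pair_def by (elim conjE) blast
lemma s_ract: "g \<in> G \<Longrightarrow> c \<in> C \<Longrightarrow> sG g = rC c \<Longrightarrow> sG (ract g c) = sC c"
  using mp unfolding matched_pair_def by (elim conjE) blast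
lemma compat: "g \<in> G \<Longrightarrow> c \<in> C \<Longrightarrow> sG g = rC c \<Longrightarrow> sC (lact g c) = rG (ract g c)"
  using mp unfolding matched_pair_def by (elim conjE) blast

lemma G_lcancel:
  assumes "k \<in> G" "a \<in> G" "b \<in> G" "sG k = rG a" "sG k = rG b" "mG k a = mG k b"
  shows "a = b"
proof -
  obtain h where h: "h \<in> G" "sG k = rG h" "sG h = rG k" "mG k h = rG k" "mG h k = sG k"
    using G_inv[OF assms(1)] by blast
  have "mG h (mG k a) = mG (mG h k) a" using G_assoc[of h k a] h assms by simp
  also have "\<dots> = a" using h assms G_r[of a] by simp
  finally have 1: "mG h (mG k a) = a" .
  have "mG h (mG k b) = mG (mG h k) b" using G_assoc[of h k b] h assms by simp
  also have "\<dots> = b" using h assms G_r[of b] by simp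
  finally show ?thesis using 1 assms by simp
qed

lemma lact_cancel:
  assumes "g \<in> G" "c \<in> C" "d \<in> C" "sG g = rC c" "sG g = rC d" "lact g c = lact g d"
  shows "c = d"
proof -
  obtain h where h: "h \<in> G" "sG g = rG h" "sG h = rG g" "mG g h = rG g" "mG h g = sG g"
    using G_inv[OF assms(1)] by blast
  have "lact h (lact g c) = lact (mG h g) c" using lact_m[of h g c] h assms by simp
  also have "\<dots> = c" using h assms lact_id[of c] by metis
  finally have 1: "lact h (lact g c) = c" .
  have "lact h (lact g d) = lact (mG h g) d" using lact_m[of h g d] h assms by simp
  also have "\<dots> = d" using h assms lact_id[of d] by metis
  finally show ?thesis using 1 assms by simp
qed

abbreviation "Z \<equiv> zs_mor C sC G rG"

lemma LC: "left_cancellative Z (zs_r rC) (zs_s sG) (zs_mult mC mG lact ract)"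
  unfolding left_cancellative_def
proof (intro ballI impI)
  fix x y z assume xyz: "x \<in> Z" "y \<in> Z" "z \<in> Z"
    and e1: "zs_s sG x = zs_r rC y" and e2: "zs_s sG x = zs_r rC z"
    and e3: "zs_mult mC mG lact ract x y = zs_mult mC mG lact ract x z"
  obtain c1 g1 where x: "x = (c1, g1)" "c1 \<in> C" "g1 \<in> G" "sC c1 = rG g1"
    using xyz unfolding zs_mor_def by auto
  obtain c2 g2 where y: "y = (c2, g2)" "c2 \<in> C" "g2 \<in> G" "sC c2 = rG g2"
    using xyz unfolding zs_mor_def by auto
  obtain c3 g3 where z: "z = (c3, g3)" "c3 \<in> C" "g3 \<in> G" "sC c3 = rG g3"
    using xyz unfolding zs_mor_def by auto
  have s2: "sG g1 = rC c2" using e1 x y unfolding zs_s_def zs_r_def by simp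
  have s3: "sG g1 = rC c3" using e2 x z unfolding zs_s_def zs_r_def by simp
  have m1: "mC c1 (lact g1 c2) = mC c1 (lact g1 c3)"
    and m2: "mG (ract g1 c2) g2 = mG (ract g1 c3) g3"
    using e3 x y z unfolding zs_mult_def by auto
  have l2: "lact g1 c2 \<in> C" "ract g1 c2 \<in> G" using closure x y s2 by auto
  have l3: "lact g1 c3 \<in> C" "ract g1 c3 \<in> G" using closure x z s3 by auto
  have "lact g1 c2 = lact g1 c3"
    using lc l2 l3 x m1 r_lact[of g1 c2] r_lact[of g1 c3] s2 s3 y z
    unfolding left_cancellative_def by metis
  hence c23: "c2 = c3" using lact_cancel[of g1 c2 c3] x y z s2 s3 by simp
  have "g2 = g3"
    using G_lcancel[of "ract g1 c2" g2 g3] l2 x y z c23 m2 s_ract[of g1 c2] s2 by metis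
  thus "y = z" using c23 y z by simp
qed

lemma ideal_char:
  assumes "x \<in> Z"
  shows "right_ideal Z (zs_r rC) (zs_s sG) (zs_mult mC mG lact ract) x =
         {(e, l). e \<in> right_ideal C rC sC mC (fst x) \<and> l \<in> G \<and> sC e = rG l}"
proof -
  obtain a g where x: "x = (a, g)" "a \<in> C" "g \<in> G" "sC a = rG g"
    using assms unfolding zs_mor_def by auto
  show ?thesis
  proof (rule set_eqI, rule iffI)
    fix p assume "p \<in> right_ideal Z (zs_r rC) (zs_s sG) (zs_mult mC mG lact ract) x"
    then obtain c k where ck: "c \<in> C" "k \<in> G" "sC c = rG k" "sG g = rC c"
      and p: "p = zs_mult mC mG lact ract (a, g) (c, k)"
      unfolding right_ideal_def zs_mor_def zs_s_def zs_r_def x by auto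
    have cl: "lact g c \<in> C" "ract g c \<in> G" using closure x ck by auto
    have rl: "rC (lact g c) = sC a" using r_lact x ck by simp
    have e: "mC a (lact g c) \<in> right_ideal C rC sC mC a"
      unfolding right_ideal_def using cl rl by auto
    have "sC (mC a (lact g c)) = sC (lact g c)" using C_m x cl rl by simp
    also have "\<dots> = rG (ract g c)" using compat x ck by simp
    also have "\<dots> = rG (mG (ract g c) k)" using G_m[of "ract g c" k] cl ck s_ract x by simp
    finally have "sC (mC a (lact g c)) = rG (mG (ract g c) k)" .
    moreover have "mG (ract g c) k \<in> G" using G_m[of "ract g c" k] cl ck s_ract x by simp
    ultimately show "p \<in> {(e, l). e \<in> right_ideal C rC sC mC (fst x) \<and> l \<in> G \<and> sC e = rG l}"
      using p e x unfolding zs_mult_def by simp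
  next
    fix p assume pm: "p \<in> {(e, l). e \<in> right_ideal C rC sC mC (fst x) \<and> l \<in> G \<and> sC e = rG l}"
    obtain e l where p: "p = (e, l)" by (cases p)
    have e: "e \<in> right_ideal C rC sC mC a" and l: "l \<in> G" and sel: "sC e = rG l"
      using pm p x by auto
    obtain d where ed: "e = mC a d" and d: "d \<in> C" "sC a = rC d"
      using e unfolding right_ideal_def by blast
    have sl: "sC (mC a d) = rG l" using sel ed by simp
    have sdl: "sC d = rG l" using sl C_m x d by simp
    obtain h where h: "h \<in> G" "sG g = rG h" "sG h = rG g" "mG g h = rG g" "mG h g = sG g"
      using G_inv[OF x(3)] by blast
    define c where "c = lact h d"
    have hd: "sG h = rC d" using h x d by simp
    have c: "c \<in> C" "rC c = sG g" using closure[OF h(1) d(1) hd] r_lact[OF h(1) d(1) hd] h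
      unfolding c_def by auto
    have lgc: "lact g c = d"
      using lact_m[of g h d] x h hd d lact_id[of d] unfolding c_def by simp
    define kk where "kk = ract g c"
    have kk: "kk \<in> G" "sG kk = sC c" "rG kk = sC d"
      using closure[of g c] s_ract[of g c] compat[of g c] x c lgc unfolding kk_def by auto
    obtain kk' where kk': "kk' \<in> G" "sG kk = rG kk'" "sG kk' = rG kk" "mG kk kk' = rG kk" "mG kk' kk = sG kk"
      using G_inv[OF kk(1)] by blast
    define k where "k = mG kk' l"
    have k: "k \<in> G" "rG k = sC c" using G_m[of kk' l] kk' kk l sdl unfolding k_def by auto
    have "mG kk k = mG (mG kk kk') l" using G_assoc[of kk kk' l] kk kk' l sdl unfolding k_def by simp
    also have "\<dots> = l" using kk' kk sdl G_r[OF l] by simp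
    finally have kl: "mG kk k = l" .
    have "(c, k) \<in> Z" using c k unfolding zs_mor_def by auto
    moreover have "zs_s sG x = zs_r rC (c, k)" using c x unfolding zs_s_def zs_r_def by simp
    moreover have "p = zs_mult mC mG lact ract x (c, k)"
      using p ed x lgc kl unfolding zs_mult_def kk_def by simp
    ultimately show "p \<in> right_ideal Z (zs_r rC) (zs_s sG) (zs_mult mC mG lact ract) x"
      unfolding right_ideal_def by blast
  qed
qed

lemma FA: "finitely_aligned Z (zs_r rC) (zs_s sG) (zs_mult mC mG lact ract)"
  unfolding finitely_aligned_def
proof (intro ballI)
  fix x y assume xy: "x \<in> Z" "y \<in> Z"
  have a: "fst x \<in> C" "fst y \<in> C" using xy unfolding zs_mor_def by auto
  obtain F where F: "finite F" "F \<subseteq> C"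
    "right_ideal C rC sC mC (fst x) \<inter> right_ideal C rC sC mC (fst y) = (\<Union>c\<in>F. right_ideal C rC sC mC c)"
    using fa a(1) a(2) unfolding finitely_aligned_def by (meson)
  define F' where "F' = (\<lambda>c. (c, sC c)) ` F"
  have F'Z: "F' \<subseteq> Z" using F sC_in_G unfolding F'_def zs_mor_def by auto
  define S where "S = (\<lambda>c. {(e, l). e \<in> right_ideal C rC sC mC c \<and> l \<in> G \<and> sC e = rG l})"
  have eq: "right_ideal Z (zs_r rC) (zs_s sG) (zs_mult mC mG lact ract) (c, sC c) = S c"
    if "c \<in> F" for c
  proof -
    have "(c, sC c) \<in> Z" using F'Z that unfolding F'_def by blast
    from ideal_char[OF this] show ?thesis unfolding S_def by simp
  qed
  have U: "(\<Union>z\<in>F'. right_ideal Z (zs_r rC) (zs_s sG) (zs_mult mC mG lact ract) z) = (\<Union>c\<in>F. S c)"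
    unfolding F'_def using eq by simp
  have I: "S (fst x) \<inter> S (fst y) = (\<Union>c\<in>F. S c)"
  proof (rule set_eqI)
    fix p :: "'a \<times> 'a"
    obtain e l where p: "p = (e, l)" by (cases p)
    have "p \<in> S (fst x) \<inter> S (fst y) \<longleftrightarrow>
        e \<in> right_ideal C rC sC mC (fst x) \<inter> right_ideal C rC sC mC (fst y) \<and> l \<in> G \<and> sC e = rG l"
      unfolding S_def p by blast
    also have "\<dots> \<longleftrightarrow> e \<in> (\<Union>c\<in>F. right_ideal C rC sC mC c) \<and> l \<in> G \<and> sC e = rG l"
      using F(3) by simp
    also have "\<dots> \<longleftrightarrow> p \<in> (\<Union>c\<in>F. S c)" unfolding S_def p by blast
    finally show "p \<in> S (fst x) \<inter> S (fst y) \<longleftrightarrow> p \<in> (\<Union>c\<in>F. S c)" .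
  qed
  have "right_ideal Z (zs_r rC) (zs_s sG) (zs_mult mC mG lact ract) x \<inter>
        right_ideal Z (zs_r rC) (zs_s sG) (zs_mult mC mG lact ract) y =
        (\<Union>z\<in>F'. right_ideal Z (zs_r rC) (zs_s sG) (zs_mult mC mG lact ract) z)"
    using ideal_char[OF xy(1)] ideal_char[OF xy(2)] I U unfolding S_def by simp
  thus "\<exists>F. finite F \<and> F \<subseteq> Z \<and>
        right_ideal Z (zs_r rC) (zs_s sG) (zs_mult mC mG lact ract) x \<inter>
        right_ideal Z (zs_r rC) (zs_s sG) (zs_mult mC mG lact ract) y =
        (\<Union>z\<in>F. right_ideal Z (zs_r rC) (zs_s sG) (zs_mult mC mG lact ract) z)"
    using F(1) F'Z unfolding F'_def by blast
qed

end

theorem lemma3p5: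
  assumes "groupoid G rG sG mG"
    and "category C rC sC mC"
    and "left_cancellative C rC sC mC"
    and "finitely_aligned C rC sC mC"
    and "matched_pair G rG sG mG C rC sC mC lact ract"
  shows "left_cancellative (zs_mor C sC G rG) (zs_r rC) (zs_s sG) (zs_mult mC mG lact ract)
       \<and> finitely_aligned (zs_mor C sC G rG) (zs_r rC) (zs_s sG) (zs_mult mC mG lact ract)"
proof -
  interpret zsctx G rG sG mG C rC sC mC lact ract using assms by unfold_locales
  show ?thesis using LC FA by blast
qed

end
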